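(* In the model described in the context, if all high-level operations are totally ordered and $\tau\ge 3f+1$, then Algorithm 1 with threshold $t=f+1$ satisfies both completeness and strong accuracy.
   Context: Model. An asynchronous system has client processes (writers, readers, auditors) and $n$ storage objects $o_1,\dots,o_n$. Each $o_k$ is a linearisable loggable read/write register with a log $L_k$ (initially empty). Its rw-write($b$) stores a block; rw-read() returns the current block and appends $\langle p_r,\mathit{label}(b)\rangle$ to $L_k$, where $p_r$ is the reader and $\mathit{label}(b)$ identifies the value from which $b$ was derived; rw-getLog() returns $L_k$. A register over values $\mathbb{V}$ is emulated by information dispersal. An a-write($v$) encodes $v$ into $b_{v_1},\dots,b_{v_n}$ with $b_{v_k}$ sent to $o_k$. Any $\tau$ distinct blocks of $v$ recover $v$, and fewer do not. Total order: all high-level operations are serialised via total order broadcast and executed sequentially, so objects hold blocks of a single value. Faults. Writers and auditors can only crash. Faulty readers may crash or contact a subset of objects. At most $f$ objects are faulty; a faulty object may crash, omit its block, omit log records from auditors, and report records of nonexistent reads. Providing set $P_{p_r,v}$: the set of objects that received a write of $b_{v_k}$ and responded $b_{v_k}$ to a read of $p_r$. The value $v$ is effectively read by $p_r$ iff $|P_{p_r,v}|\ge\tau$. Algorithm 1 (a-audit with threshold $t$): 1. Invoke rw-getLog on all $n$ objects in parallel, and wait for responses from at least $n-f$; let $L[k]$ be the log received from $o_k$. 2. For every record $\langle p_r,\mathit{label}(v)\rangle$ in some $L[k]$, let $\mathcal{E}_{p_r,v}=\{k:\langle p_r,\mathit{label}(v)\rangle\in L[k]\}$, and add it to $E_A$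 iff $|\mathcal{E}_{p_r,v}|\ge t$. 3. Return $E_A$. Completeness: $|P_{p_r,v}|\ge\tau$ before the audit implies $\mathcal{E}_{p_r,v}\in E_A$. Strong accuracy: for every correct reader $p_r$ and every value $v$, $|P_{p_r,v}|<\tau$ before the audit implies $\mathcal{E}_{p_r,v}\notin E_A$. *)

theory Defs
  imports Main
begin

text \<open>
Objects are the natural numbers below n.  Since all
high-level operations are totally ordered and executed sequentially, the
execution preceding the audit is a list of high-level operations.
An a-read of reader p is recorded together with the set S of storage objects
at which its rw-read took effect (was applied by the linearisable object).
Crashed writes that never took effect are not part of the history.
Labels are identified with values (label is injective).
\<close>

datatype ('p, 'v) hop = AWrite 'v | ARead 'p "nat set"

text \<open>Value whose blocks are held by correct objects after the operations xs
(None if no write took effect yet).\<close>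
definition last_write :: "('p, 'v) hop list \<Rightarrow> 'v option" where
  "last_write xs = foldl (\<lambda>acc op. case op of AWrite v \<Rightarrow> Some v | ARead _ _ \<Rightarrow> acc) None xs"

text \<open>Block (identified by the value it was derived from) returned by object k
to the i-th operation of h (a read).\<close>
definition resp ::
  "nat set \<Rightarrow> (nat \<Rightarrow> nat \<Rightarrow> 'v option) \<Rightarrow> ('p, 'v) hop list \<Rightarrow> nat \<Rightarrow> nat \<Rightarrow> 'v option" where
  "resp F fr h i k = (if k \<in> F then fr i k else last_write (take i h))"

text \<open>Providing set P_{p,v}: objects that received a write of the block of v
and responded that block to a read of p.\<close>
definition providing_set ::
  "nat \<Rightarrow> nat set \<Rightarrow> (nat \<Rightarrow> nat \<Rightarrow> 'v option) \<Rightarrow> ('p, 'v) hop list \<Rightarrow> 'p \<Rightarrow> 'v \<Rightarrow> nat set" where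
  "providing_set n F fr h p v =
     {k \<in> {..<n}. \<exists>i<length h. \<exists>S. h ! i = ARead p S \<and> k \<in> S \<and> resp F fr h i k = Some v}"

text \<open>Actual log of a (correct) object k after history h, as a set of records
(reader, label of value).\<close>
definition true_log ::
  "nat set \<Rightarrow> (nat \<Rightarrow> nat \<Rightarrow> 'v option) \<Rightarrow> ('p, 'v) hop list \<Rightarrow> nat \<Rightarrow> ('p \<times> 'v) set" where
  "true_log F fr h k =
     {(p, v). \<exists>i<length h. \<exists>S. h ! i = ARead p S \<and> k \<in> S \<and> resp F fr h i k = Some v}"

definition valid_exec ::
  "nat \<Rightarrow> nat \<Rightarrow> nat set \<Rightarrow> (nat \<Rightarrow> nat \<Rightarrow> 'v option) \<Rightarrow> ('p, 'v) hop list \<Rightarrow> 'p set \<Rightarrow> bool" where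
  "valid_exec n f F fr h CR \<longleftrightarrow>
     F \<subseteq> {..<n} \<and> card F \<le> f \<and>
     (\<forall>i k w. fr i k = Some w \<longrightarrow> AWrite w \<in> set (take i h)) \<and>
     (\<forall>i<length h. \<forall>p S. h ! i = ARead p S \<longrightarrow>
         S \<subseteq> {..<n} \<and> (p \<in> CR \<longrightarrow> {..<n} - F \<subseteq> S))"

text \<open>Step 1 of the audit: responses to rw-getLog from the objects in Rsp
(at least n - f of them); RL k is the log reported by o_k.  Correct objects
report their true log; faulty ones may report anything.\<close>
definition valid_getlog ::
  "nat \<Rightarrow> nat \<Rightarrow> nat set \<Rightarrow> (nat \<Rightarrow> nat \<Rightarrow> 'v option) \<Rightarrow> ('p, 'v) hop list \<Rightarrow>
   nat set \<Rightarrow> (nat \<Rightarrow> ('p \<times> 'v) set) \<Rightarrow> bool" where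
  "valid_getlog n f F fr h Rsp RL \<longleftrightarrow>
     Rsp \<subseteq> {..<n} \<and> n - f \<le> card Rsp \<and>
     (\<forall>k \<in> Rsp - F. RL k = true_log F fr h k)"

definition evid_set :: "nat set \<Rightarrow> (nat \<Rightarrow> ('p \<times> 'v) set) \<Rightarrow> 'p \<Rightarrow> 'v \<Rightarrow> nat set" where
  "evid_set Rsp RL p v = {k \<in> Rsp. (p, v) \<in> RL k}"

text \<open>Algorithm 1 with threshold t; each element of E_A is tagged with the
record (p, label v) it refers to.\<close>
definition a_audit ::
  "nat \<Rightarrow> nat set \<Rightarrow> (nat \<Rightarrow> ('p \<times> 'v) set) \<Rightarrow> ('p \<times> 'v \<times> nat set) set" where
  "a_audit t Rsp RL =
     {(p, v, E). (\<exists>k \<in> Rsp. (p, v) \<in> RL k) \<and> E = evid_set Rsp RL p v \<and> t \<le> card E}"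

end

theory Submission
  imports Defs
begin

theorem theorem5:
  fixes n f \<tau> :: nat
    and F :: "nat set"
    and fr :: "nat \<Rightarrow> nat \<Rightarrow> 'v option"
    and h :: "('p, 'v) hop list"
    and CR :: "'p set"
    and Rsp :: "nat set"
    and RL :: "nat \<Rightarrow> ('p \<times> 'v) set"
  assumes "3 * f + 1 \<le> \<tau>"
    and "\<tau> + f \<le> n"
    and "valid_exec n f F fr h CR"
    and "valid_getlog n f F fr h Rsp RL"
  shows "(\<forall>p v. \<tau> \<le> card (providing_set n F fr h p v) \<longrightarrow>
            (p, v, evid_set Rsp RL p v) \<in> a_audit (f + 1) Rsp RL)
       \<and> (\<forall>p \<in> CR. \<forall>v. card (providing_set n F fr h p v) < \<tau> \<longrightarrow>
            (p, v, evid_set Rsp RL p v) \<notin> a_audit (f + 1) Rsp RL)"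
proof (intro conjI allI impI ballI)
  have FS: "F \<subseteq> {..<n}" "card F \<le> f" using assms(3) unfolding valid_exec_def by auto
  have RS: "Rsp \<subseteq> {..<n}" "n - f \<le> card Rsp" "\<forall>k \<in> Rsp - F. RL k = true_log F fr h k"
    using assms(4) unfolding valid_getlog_def by auto
  have finF: "finite F" using FS finite_subset by blast
  have finR: "finite Rsp" using RS finite_subset by blast
  fix p v
  let ?P = "providing_set n F fr h p v"
  have Psub: "?P \<subseteq> {..<n}" unfolding providing_set_def by auto
  have finP: "finite ?P" using Psub finite_subset by blast
  {
    assume A: "\<tau> \<le> card ?P"
    let ?G = "(?P \<inter> Rsp) - F"
    have c1: "card (?P \<union> Rsp) \<le> n"
      using card_mono[of "{..<n}" "?P \<union> Rsp"] Psub RS(1) by auto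
    have "card (?P \<union> Rsp) + card (?P \<inter> Rsp) = card ?P + card Rsp"
      using card_Un_Int[OF finP finR] by simp
    hence c2: "card (?P \<inter> Rsp) + n \<ge> card ?P + card Rsp" using c1 by linarith
    have "card ?G \<ge> card (?P \<inter> Rsp) - card F"
      using diff_card_le_card_Diff[OF finF, of "?P \<inter> Rsp"] by simp
    hence cG: "card ?G \<ge> f + 1" using c2 A RS(2) FS(2) assms(1,2) by linarith
    have GE: "?G \<subseteq> evid_set Rsp RL p v"
    proof
      fix k assume k: "k \<in> ?G"
      hence "RL k = true_log F fr h k" using RS(3) by auto
      moreover have "(p, v) \<in> true_log F fr h k" using k
        unfolding providing_set_def true_log_def by auto
      ultimately show "k \<in> evid_set Rsp RL p v" using k unfolding evid_set_def by auto
    qed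
    have finE: "finite (evid_set Rsp RL p v)" using finR unfolding evid_set_def by auto
    have cE: "f + 1 \<le> card (evid_set Rsp RL p v)"
      using card_mono[OF finE GE] cG by linarith
    hence "evid_set Rsp RL p v \<noteq> {}" by auto
    then obtain k where "k \<in> Rsp" "(p, v) \<in> RL k" unfolding evid_set_def by auto
    thus "(p, v, evid_set Rsp RL p v) \<in> a_audit (f + 1) Rsp RL"
      using cE unfolding a_audit_def by auto
  }
  {
    assume pC: "p \<in> CR" and B: "card ?P < \<tau>"
    have noc: "False" if k: "k \<in> Rsp" "k \<notin> F" "(p, v) \<in> true_log F fr h k" for k
    proof -
      obtain i S where i: "i < length h" "h ! i = ARead p S" "k \<in> S" "resp F fr h i k = Some v"
        using k(3) unfolding true_log_def by auto
      have lw: "last_write (take i h) = Some v" using i(4) k(2) unfolding resp_def by auto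
      have "{..<n} - F \<subseteq> S" using assms(3) pC i unfolding valid_exec_def by blast
      hence "{..<n} - F \<subseteq> ?P" using i lw unfolding providing_set_def resp_def by auto
      hence "card ({..<n} - F) \<le> card ?P" using card_mono finP by blast
      moreover have "card ({..<n} - F) = n - card F" using card_Diff_subset[OF finF FS(1)] by simp
      ultimately show False using B FS(2) assms(2) by linarith
    qed
    have "evid_set Rsp RL p v \<subseteq> F"
    proof
      fix k assume "k \<in> evid_set Rsp RL p v"
      hence k: "k \<in> Rsp" "(p, v) \<in> RL k" unfolding evid_set_def by auto
      show "k \<in> F"
      proof (rule ccontr)
        assume "k \<notin> F"
        hence "RL k = true_log F fr h k" using RS(3) k by auto
        thus False using noc k \<open>k \<notin> F\<close> by auto
      qed
    qed
    hence "card (evid_set Rsp RL p v) \<le> card F" by (rule card_mono[OF finF])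
    hence "card (evid_set Rsp RL p v) \<le> f" using FS(2) by (rule le_trans)
    thus "(p, v, evid_set Rsp RL p v) \<notin> a_audit (f + 1) Rsp RL"
      unfolding a_audit_def by auto
  }
qed

end
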